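(* Let $(X,d)$ be a finite metric space and $m\ge 0$ an integer. Let $G_0,G_1,\dots,G_m$ be graphs with vertex set $X$, where $G_0$ is the complete graph on $X$ and, for each $0\le i<m$, $G_{i+1}$ is obtained from $G_i$ through a $d$-erasure. Then $G_m$ contains a minimum spanning tree of $(X,d)$.
   Context: All graphs are finite, undirected, simple; edges $xy$ are weighted by $d(xy)=d(x,y)$. A minimum spanning tree of $(X,d)$ is a spanning tree of the complete graph on $X$ minimizing the sum of the weights of its edges. A facet edge of $G$ is an edge $xy$ such that $\{x,y\}$ is a maximal clique of $G$. An edge of $G$ is exposed if it is contained in a unique maximal clique of $G$ and it is not a facet edge. For graphs $G,H$ on vertex set $X$, $H$ is obtained from $G$ through a $d$-erasure if $H=G-e$ for an exposed edge $e$ of $G$ such that $d(e)\ge d(e')$ for every exposed edge $e'$ of $G$. *)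

theory Defs
  imports Complex_Main
begin

definition finite_metric_space :: "'a set \<Rightarrow> ('a \<Rightarrow> 'a \<Rightarrow> real) \<Rightarrow> bool" where
  "finite_metric_space X d \<longleftrightarrow> finite X \<and>
     (\<forall>x\<in>X. \<forall>y\<in>X. (d x y = 0 \<longleftrightarrow> x = y)) \<and>
     (\<forall>x\<in>X. \<forall>y\<in>X. d x y = d y x) \<and>
     (\<forall>x\<in>X. \<forall>y\<in>X. \<forall>z\<in>X. d x z \<le> d x y + d y z)"

definition graph_on :: "'a set \<Rightarrow> 'a set set \<Rightarrow> bool" where
  "graph_on X E \<longleftrightarrow> (\<forall>e\<in>E. e \<subseteq> X \<and> card e = 2)"

definition complete_graph :: "'a set \<Rightarrow> 'a set set" where
  "complete_graph X = {{x, y} | x y. x \<in> X \<and> y \<in> X \<and> x \<noteq> y}"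

text \<open>Weight of an edge e = {x,y}: d(e) = d(x,y) (well defined since d is symmetric).\<close>
definition edge_weight :: "('a \<Rightarrow> 'a \<Rightarrow> real) \<Rightarrow> 'a set \<Rightarrow> real" where
  "edge_weight d e = d (SOME x. x \<in> e) (SOME y. y \<in> e \<and> y \<noteq> (SOME x. x \<in> e))"

definition clique :: "'a set \<Rightarrow> 'a set set \<Rightarrow> 'a set \<Rightarrow> bool" where
  "clique X E C \<longleftrightarrow> C \<subseteq> X \<and> (\<forall>x\<in>C. \<forall>y\<in>C. x \<noteq> y \<longrightarrow> {x, y} \<in> E)"

definition maximal_clique :: "'a set \<Rightarrow> 'a set set \<Rightarrow> 'a set \<Rightarrow> bool" where
  "maximal_clique X E C \<longleftrightarrow> clique X E C \<and> (\<forall>C'. clique X E C' \<and> C \<subseteq> C' \<longrightarrow> C' = C)"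

definition facet_edge :: "'a set \<Rightarrow> 'a set set \<Rightarrow> 'a set \<Rightarrow> bool" where
  "facet_edge X E e \<longleftrightarrow> e \<in> E \<and> maximal_clique X E e"

definition exposed_edge :: "'a set \<Rightarrow> 'a set set \<Rightarrow> 'a set \<Rightarrow> bool" where
  "exposed_edge X E e \<longleftrightarrow> e \<in> E \<and> (\<exists>!C. maximal_clique X E C \<and> e \<subseteq> C) \<and> \<not> facet_edge X E e"

definition d_erasure :: "'a set \<Rightarrow> ('a \<Rightarrow> 'a \<Rightarrow> real) \<Rightarrow> 'a set set \<Rightarrow> 'a set set \<Rightarrow> bool" where
  "d_erasure X d G H \<longleftrightarrow> (\<exists>e. exposed_edge X G e \<and> H = G - {e} \<and>
       (\<forall>e'. exposed_edge X G e' \<longrightarrow> edge_weight d e' \<le> edge_weight d e))"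

definition connected_on :: "'a set \<Rightarrow> 'a set set \<Rightarrow> bool" where
  "connected_on X T \<longleftrightarrow> (\<forall>x\<in>X. \<forall>y\<in>X. (\<lambda>u v. {u, v} \<in> T)\<^sup>*\<^sup>* x y)"

text \<open>A tree is a connected acyclic graph; acyclicity is expressed as: removing any edge
  disconnects its endpoints (every edge is a bridge).\<close>
definition spanning_tree :: "'a set \<Rightarrow> 'a set set \<Rightarrow> bool" where
  "spanning_tree X T \<longleftrightarrow> T \<subseteq> complete_graph X \<and> connected_on X T \<and>
     (\<forall>x y. {x, y} \<in> T \<longrightarrow> \<not> (\<lambda>u v. {u, v} \<in> T - {{x, y}})\<^sup>*\<^sup>* x y)"

definition tree_weight :: "('a \<Rightarrow> 'a \<Rightarrow> real) \<Rightarrow> 'a set set \<Rightarrow> real" where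
  "tree_weight d T = (\<Sum>e\<in>T. edge_weight d e)"

definition minimum_spanning_tree :: "'a set \<Rightarrow> ('a \<Rightarrow> 'a \<Rightarrow> real) \<Rightarrow> 'a set set \<Rightarrow> bool" where
  "minimum_spanning_tree X d T \<longleftrightarrow> spanning_tree X T \<and>
     (\<forall>T'. spanning_tree X T' \<longrightarrow> tree_weight d T \<le> tree_weight d T')"

end

theory Submission
  imports Defs
begin


lemma mc_clique: "maximal_clique Y E K \<Longrightarrow> clique Y E K"
  unfolding maximal_clique_def by simp

lemma mc_max: "maximal_clique Y E K \<Longrightarrow> clique Y E C' \<Longrightarrow> K \<subseteq> C' \<Longrightarrow> C' = K"
  unfolding maximal_clique_def by simp

lemma mc_intro: "clique Y E K \<Longrightarrow> (\<And>C'. clique Y E C' \<Longrightarrow> K \<subseteq> C' \<Longrightarrow> C' = K) \<Longrightarrow> maximal_clique Y E K"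
  unfolding maximal_clique_def by auto

lemma clique_sub_Y: "clique Y E K \<Longrightarrow> K \<subseteq> Y"
  unfolding clique_def by simp

lemma clique_edge: "clique Y E K \<Longrightarrow> a \<in> K \<Longrightarrow> b \<in> K \<Longrightarrow> a \<noteq> b \<Longrightarrow> {a,b} \<in> E"
  unfolding clique_def by simp

lemma clique_sub: "clique Y E K \<Longrightarrow> K' \<subseteq> K \<Longrightarrow> clique Y E K'"
  unfolding clique_def by blast

lemma clique_mono_Y: "clique Y E K \<Longrightarrow> Y \<subseteq> Y' \<Longrightarrow> clique Y' E K"
  unfolding clique_def by blast

lemma clique_restr: "clique Y E K \<Longrightarrow> K \<subseteq> Y' \<Longrightarrow> clique Y' E K"
  unfolding clique_def by blast

lemma max_ext:
  assumes "finite Y" "clique Y E K"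
  shows "\<exists>M. maximal_clique Y E M \<and> K \<subseteq> M"
proof -
  let ?S = "{M. clique Y E M \<and> K \<subseteq> M}"
  have "?S \<subseteq> Pow Y" by (auto simp: clique_def)
  then have fin: "finite ?S" using assms(1) by (meson finite_Pow_iff finite_subset)
  have ne: "K \<in> ?S" using assms by auto
  have "Max (card ` ?S) \<in> card ` ?S" using fin ne by (intro Max_in) auto
  then obtain M where M1: "M \<in> ?S" "card M = Max (card ` ?S)" by auto
  have M: "M \<in> ?S" "\<forall>M'\<in>?S. card M' \<le> card M"
    using M1 fin by auto
  have "maximal_clique Y E M"
    unfolding maximal_clique_def
  proof (intro conjI allI impI)
    show "clique Y E M" using M by auto
    fix C' assume h: "clique Y E C' \<and> M \<subseteq> C'"
    then have "C' \<in> ?S" using M by auto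
    then have "card C' \<le> card M" using M by auto
    moreover have "finite C'" using h assms(1) unfolding clique_def by (meson finite_subset)
    ultimately show "C' = M" using h card_subset_eq by (metis antisym card_mono)
  qed
  then show ?thesis using M by auto
qed

lemma exposed_intro:
  assumes "f \<in> E" "clique Y E C" "f \<subseteq> C" "C \<noteq> f"
    "\<forall>K. clique Y E K \<and> f \<subseteq> K \<longrightarrow> K \<subseteq> C"
  shows "exposed_edge Y E f"
proof -
  have mc: "maximal_clique Y E C"
    using assms unfolding maximal_clique_def by blast
  have uq: "\<exists>!C. maximal_clique Y E C \<and> f \<subseteq> C"
  proof (rule ex1I[of _ C])
    show "maximal_clique Y E C \<and> f \<subseteq> C" using mc assms by auto
    fix M assume "maximal_clique Y E M \<and> f \<subseteq> M"
    then show "M = C" using assms(5) mc unfolding maximal_clique_def by blast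
  qed
  have "\<not> facet_edge Y E f"
    using assms mc unfolding facet_edge_def maximal_clique_def by blast
  then show ?thesis using uq assms(1) unfolding exposed_edge_def by blast
qed

lemma exposed_elim:
  assumes "finite Y" "exposed_edge Y E f"
  shows "\<exists>C. maximal_clique Y E C \<and> f \<subseteq> C \<and> C \<noteq> f \<and> (\<forall>K. clique Y E K \<and> f \<subseteq> K \<longrightarrow> K \<subseteq> C)"
proof -
  from assms(2) obtain C where C: "maximal_clique Y E C" "f \<subseteq> C"
    and u: "\<And>M. maximal_clique Y E M \<and> f \<subseteq> M \<Longrightarrow> M = C"
    and fE: "f \<in> E" and nf: "\<not> facet_edge Y E f"
    unfolding exposed_edge_def by metis
  have "C \<noteq> f" using C fE nf unfolding facet_edge_def by auto
  moreover have "\<forall>K. clique Y E K \<and> f \<subseteq> K \<longrightarrow> K \<subseteq> C"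
  proof (intro allI impI)
    fix K assume "clique Y E K \<and> f \<subseteq> K"
    then obtain M where "maximal_clique Y E M" "K \<subseteq> M" using max_ext assms(1) by blast
    then show "K \<subseteq> C" using u \<open>clique Y E K \<and> f \<subseteq> K\<close> by blast
  qed
  ultimately show ?thesis using C by blast
qed

lemma exposed_E: "exposed_edge Y E f \<Longrightarrow> f \<in> E"
  unfolding exposed_edge_def by simp

lemma exposed_sub: "exposed_edge Y E f \<Longrightarrow> f \<subseteq> Y"
  unfolding exposed_edge_def maximal_clique_def clique_def by blast



definition simplicial :: "'a set set \<Rightarrow> 'a set \<Rightarrow> 'a \<Rightarrow> bool" where
  "simplicial E Y s \<longleftrightarrow> s \<in> Y \<and> (\<forall>a\<in>Y. \<forall>b\<in>Y. {s,a} \<in> E \<longrightarrow> {s,b} \<in> E \<longrightarrow> a \<noteq> b \<longrightarrow> {a,b} \<in> E)"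

definition P1 :: "'a set set \<Rightarrow> 'a set \<Rightarrow> bool" where
  "P1 E Y \<longleftrightarrow> (\<forall>Z\<subseteq>Y. Z \<noteq> {} \<longrightarrow> (\<exists>s. simplicial E Z s))"

definition spans :: "'a set \<Rightarrow> 'a set \<Rightarrow> bool" where
  "spans A C \<longleftrightarrow> (\<exists>u\<in>C. \<exists>v\<in>C. u \<in> A \<and> v \<notin> A)"

definition crosses :: "'a set \<Rightarrow> 'a set \<Rightarrow> bool" where
  "crosses A f \<longleftrightarrow> (\<exists>u v. f = {u,v} \<and> u \<in> A \<and> v \<notin> A)"

definition nbr :: "'a set set \<Rightarrow> 'a set \<Rightarrow> 'a \<Rightarrow> 'a set" where
  "nbr E Y s = {a\<in>Y. {s,a} \<in> E}"

lemma simp_clique: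
  assumes s: "simplicial E Y s"
  shows "clique Y E (insert s (nbr E Y s))"
  unfolding clique_def
proof (intro conjI ballI impI)
  show "insert s (nbr E Y s) \<subseteq> Y" using s unfolding simplicial_def nbr_def by auto
  fix a b assume a: "a \<in> insert s (nbr E Y s)" and b: "b \<in> insert s (nbr E Y s)" and ab: "a \<noteq> b"
  show "{a,b} \<in> E"
  proof (cases "a = s")
    case True
    then have "b \<in> nbr E Y s" using b ab by auto
    then show ?thesis using True unfolding nbr_def by auto
  next
    case an: False
    then have aN: "a \<in> nbr E Y s" using a by auto
    show ?thesis
    proof (cases "b = s")
      case True
      have "{s,a} \<in> E" using aN unfolding nbr_def by auto
      moreover have "{s,a} = {a,b}" using True by (simp add: insert_commute)
      ultimately show ?thesis by simp
    next
      case False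
      then have "b \<in> nbr E Y s" using b by auto
      then show ?thesis using aN ab s unfolding nbr_def simplicial_def by blast
    qed
  qed
qed

lemma clique_nbr: "clique Y E K \<Longrightarrow> s \<in> K \<Longrightarrow> K \<subseteq> insert s (nbr E Y s)"
  unfolding clique_def nbr_def by auto

lemma simp_max:
  assumes "simplicial E Y s" "maximal_clique Y E K" "s \<in> K"
  shows "K = insert s (nbr E Y s)"
proof -
  have cK: "clique Y E K" using mc_clique[OF assms(2)] .
  have sub: "K \<subseteq> insert s (nbr E Y s)" using clique_nbr[OF cK assms(3)] .
  have cN: "clique Y E (insert s (nbr E Y s))" using simp_clique[OF assms(1)] .
  show ?thesis using mc_max[OF assms(2) cN sub] by simp
qed

lemma P1_sub: "P1 E Y \<Longrightarrow> Y' \<subseteq> Y \<Longrightarrow> P1 E Y'"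
  unfolding P1_def by blast

lemma max_restr:
  assumes "maximal_clique Y E M" "M \<subseteq> Y'" "Y' \<subseteq> Y"
  shows "maximal_clique Y' E M"
proof (rule mc_intro)
  show "clique Y' E M" using clique_restr[OF mc_clique[OF assms(1)] assms(2)] .
  fix C' assume "clique Y' E C'" "M \<subseteq> C'"
  then show "C' = M" using mc_max[OF assms(1)] clique_mono_Y[OF _ assms(3)] by blast
qed

lemma card2: "u \<noteq> v \<Longrightarrow> card {u,v} = 2" by auto

lemma only_big:
  assumes "finite Y" "maximal_clique Y E D" "3 \<le> card D"
    "\<forall>M. maximal_clique Y E M \<and> spans A M \<and> 3 \<le> card M \<longrightarrow> M = D"
    "u \<in> D" "v \<in> D" "u \<in> A" "v \<notin> A"
  shows "exposed_edge Y E {u,v}"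
proof (rule exposed_intro[where C=D])
  have uv: "u \<noteq> v" using assms(7,8) by auto
  show "{u,v} \<in> E" using clique_edge[OF mc_clique[OF assms(2)] assms(5,6) uv] .
  show "clique Y E D" using mc_clique[OF assms(2)] .
  show "{u,v} \<subseteq> D" using assms(5,6) by auto
  show "D \<noteq> {u,v}" using assms(3) card2[OF uv] by auto
  show "\<forall>K. clique Y E K \<and> {u, v} \<subseteq> K \<longrightarrow> K \<subseteq> D"
  proof (intro allI impI)
    fix K assume K: "clique Y E K \<and> {u, v} \<subseteq> K"
    have cK: "clique Y E K" using K by simp
    obtain M where M: "maximal_clique Y E M" "K \<subseteq> M" using max_ext[OF assms(1) cK] by blast
    have uvM: "u \<in> M" "v \<in> M" using M(2) K by auto
    have sp: "spans A M" unfolding spans_def using uvM assms(7,8) by blast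
    have finM: "finite M" using clique_sub_Y[OF mc_clique[OF M(1)]] assms(1) by (meson finite_subset)
    show "K \<subseteq> D"
    proof (cases "3 \<le> card M")
      case True
      have "M = D" using assms(4) M(1) sp True by blast
      then show ?thesis using M(2) by simp
    next
      case False
      have "{u,v} \<subseteq> M" using M K by auto
      have c1: "card {u,v} \<le> card M" using card_mono[OF finM \<open>{u,v} \<subseteq> M\<close>] .
      have "card {u,v} = card M" using c1 False card2[OF uv] by linarith
      then have "{u,v} = M" using card_subset_eq[OF finM \<open>{u,v} \<subseteq> M\<close>] by blast
      then have "M = {u,v}" by simp
      then have "maximal_clique Y E {u,v}" using M by simp
      have "{u,v} \<subseteq> D" using assms(5,6) by auto
      then have "D = {u,v}" using mc_max[OF \<open>maximal_clique Y E {u,v}\<close> mc_clique[OF assms(2)]] by simp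
      then show ?thesis using assms(3) card2[OF uv] by auto
    qed
  qed
qed

lemma lift:
  assumes "finite Y" "exposed_edge (Y - {s}) E f" "\<not> f \<subseteq> nbr E Y s"
  shows "exposed_edge Y E f"
proof -
  obtain C where C: "maximal_clique (Y - {s}) E C" "f \<subseteq> C" "C \<noteq> f"
    "\<forall>K. clique (Y - {s}) E K \<and> f \<subseteq> K \<longrightarrow> K \<subseteq> C"
    using exposed_elim[OF finite_Diff[OF assms(1)] assms(2)] by blast
  have fY: "f \<subseteq> Y - {s}" using exposed_sub[OF assms(2)] .
  show ?thesis
  proof (rule exposed_intro[where C=C])
    show "f \<in> E" using exposed_E[OF assms(2)] .
    show "clique Y E C" using clique_mono_Y[OF mc_clique[OF C(1)] Diff_subset] .
    show "f \<subseteq> C" using C(2) .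
    show "C \<noteq> f" using C(3) .
    show "\<forall>K. clique Y E K \<and> f \<subseteq> K \<longrightarrow> K \<subseteq> C"
    proof (intro allI impI)
      fix K assume K: "clique Y E K \<and> f \<subseteq> K"
      have "s \<notin> K"
      proof
        assume "s \<in> K"
        then have "K \<subseteq> insert s (nbr E Y s)" using clique_nbr[of Y E K s] K by simp
        then have "f \<subseteq> nbr E Y s" using K fY by auto
        then show False using assms(3) by auto
      qed
      have cK0: "clique Y E K" using K by simp
      have "K \<subseteq> Y - {s}" using clique_sub_Y[OF cK0] \<open>s \<notin> K\<close> by blast
      then have cK: "clique (Y - {s}) E K" using clique_restr[OF cK0] by blast
      have fK: "f \<subseteq> K" using K by simp
      show "K \<subseteq> C" using C(4)[rule_format, OF conjI[OF cK fK]] .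
    qed
  qed
qed



lemma crosses_I: "(s \<in> A \<longleftrightarrow> w \<notin> A) \<Longrightarrow> crosses A {s,w}"
  unfolding crosses_def by (cases "s \<in> A") (auto simp: insert_commute)

lemma spans_opp: "spans A D \<Longrightarrow> \<exists>w\<in>D. (s \<in> A \<longleftrightarrow> w \<notin> A)"
  unfolding spans_def by blast

lemma crosses_spans: "crosses A f \<Longrightarrow> f \<subseteq> M \<Longrightarrow> spans A M"
  unfolding crosses_def spans_def by blast

lemma crosses_neq: "(s \<in> A \<longleftrightarrow> w \<notin> A) \<Longrightarrow> s \<noteq> w" by auto

lemma only_big':
  assumes "finite Y" "maximal_clique Y E D" "3 \<le> card D"
    "\<forall>M. maximal_clique Y E M \<and> spans A M \<and> 3 \<le> card M \<longrightarrow> M = D"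
    "u \<in> D" "v \<in> D" "u \<in> A \<longleftrightarrow> v \<notin> A"
  shows "exposed_edge Y E {u,v}"
proof (cases "u \<in> A")
  case True then show ?thesis using only_big[OF assms(1-6)] assms(7) by auto
next
  case False then show ?thesis using only_big[OF assms(1-4,6,5)] assms(7) by (auto simp: insert_commute)
qed

lemma S_lemma:
  assumes "finite Y" "P1 E Y" "maximal_clique Y E C" "maximal_clique Y E D" "C \<noteq> D"
    "spans A C" "spans A D" "3 \<le> card D"
  shows "\<exists>f. exposed_edge Y E f \<and> crosses A f \<and> \<not> f \<subseteq> C"
  using assms
proof (induction Y arbitrary: C D rule: finite_psubset_induct)
  case (psubset Y)
  have CY: "C \<subseteq> Y" using clique_sub_Y[OF mc_clique[OF psubset.prems(2)]] .
  have DY: "D \<subseteq> Y" using clique_sub_Y[OF mc_clique[OF psubset.prems(3)]] .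
  have "Y \<noteq> {}" using psubset.prems(5) CY unfolding spans_def by auto
  then obtain s where s: "simplicial E Y s" using psubset.prems(1) unfolding P1_def by blast
  define N where "N = insert s (nbr E Y s)"
  have sY: "s \<in> Y" using s unfolding simplicial_def by auto
  have Ncl: "clique Y E N" using simp_clique[OF s] N_def by simp
  have exN: "exposed_edge Y E g" if "g \<in> E" "s \<in> g" "g \<subseteq> N" "N \<noteq> g" for g
  proof (rule exposed_intro[where C=N])
    show "g \<in> E" by (rule that(1))
    show "clique Y E N" by (rule Ncl)
    show "g \<subseteq> N" by (rule that(3))
    show "N \<noteq> g" by (rule that(4))
    show "\<forall>K. clique Y E K \<and> g \<subseteq> K \<longrightarrow> K \<subseteq> N"
    proof (intro allI impI)
      fix K assume K: "clique Y E K \<and> g \<subseteq> K"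
      then have "s \<in> K" using that(2) by blast
      then show "K \<subseteq> N" using clique_nbr[of Y E K s] K unfolding N_def by simp
    qed
  qed
  have finD: "finite D" using DY psubset.hyps(1) finite_subset by blast
  let ?Y' = "Y - {s}"
  have Y'sub: "?Y' \<subset> Y" using sY by auto
  have Y'fin: "finite ?Y'" using psubset.hyps(1) by auto
  have Y'P1: "P1 E ?Y'" using P1_sub[OF psubset.prems(1)] by auto
  have IH: "\<exists>f. exposed_edge ?Y' E f \<and> crosses A f \<and> \<not> f \<subseteq> C'"
    if "maximal_clique ?Y' E C'" "maximal_clique ?Y' E D'" "C' \<noteq> D'"
    "spans A C'" "spans A D'" "3 \<le> card D'" for C' D'
    using psubset.IH[OF Y'sub Y'P1 that] .
  show ?case
  proof (cases "s \<in> D")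
    case True
    have DN: "D = N" using simp_max[OF s psubset.prems(3) True] N_def by simp
    have sC: "s \<notin> C"
    proof
      assume "s \<in> C"
      then have "C = N" using simp_max[OF s psubset.prems(2)] N_def by simp
      then show False using DN psubset.prems(4) by simp
    qed
    obtain w where w: "w \<in> D" "s \<in> A \<longleftrightarrow> w \<notin> A" using spans_opp[OF psubset.prems(6)] by blast
    have sw: "s \<noteq> w" using w(2) by auto
    have gE: "{s,w} \<in> E" using clique_edge[OF mc_clique[OF psubset.prems(3)] True w(1) sw] .
    have "N \<noteq> {s,w}" using DN psubset.prems(7) card2[OF sw] by auto
    then have "exposed_edge Y E {s,w}" using exN[OF gE] True w(1) DN by auto
    then show ?thesis using crosses_I[OF w(2)] sC by auto
  next
    case sD: False
    have "D \<subseteq> ?Y'" using DY sD by auto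
    then have Dmax': "maximal_clique ?Y' E D" using max_restr[OF psubset.prems(3)] by blast
    show ?thesis
    proof (cases "s \<in> C")
      case sC: True
      have CN: "C = N" using simp_max[OF s psubset.prems(2) sC] N_def by simp
      have nbrC: "nbr E Y s \<subseteq> C" using CN N_def by auto
      have liftC: "exposed_edge Y E f" if "exposed_edge ?Y' E f" "\<not> f \<subseteq> C" for f
        using lift[OF psubset.hyps(1) that(1)] that(2) nbrC by blast
      have "C - {s} \<subseteq> ?Y'" using CY by auto
      then have C0cl: "clique ?Y' E (C - {s})"
        using clique_restr[OF clique_sub[OF mc_clique[OF psubset.prems(2)], of "C - {s}"]] by blast
      show ?thesis
      proof (cases "\<exists>C''. maximal_clique ?Y' E C'' \<and> spans A C'' \<and> C'' \<noteq> D \<and> C - {s} \<subseteq> C''")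
        case True
        then obtain C'' where C'': "maximal_clique ?Y' E C''" "spans A C''" "C'' \<noteq> D" "C - {s} \<subseteq> C''"
          by blast
        obtain f where f: "exposed_edge ?Y' E f" "crosses A f" "\<not> f \<subseteq> C''"
          using IH[OF C''(1) Dmax' C''(3) C''(2) psubset.prems(6,7)] by blast
        have "f \<subseteq> ?Y'" using exposed_sub[OF f(1)] .
        then have "\<not> f \<subseteq> C" using f(3) C''(4) by auto
        then show ?thesis using liftC f by blast
      next
        case noi: False
        show ?thesis
        proof (cases "\<exists>C''. maximal_clique ?Y' E C'' \<and> spans A C'' \<and> C'' \<noteq> D \<and> 3 \<le> card C''")
          case True
          then obtain C'' where C'': "maximal_clique ?Y' E C''" "spans A C''" "C'' \<noteq> D" "3 \<le> card C''"
            by blast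
          obtain f where f: "exposed_edge ?Y' E f" "crosses A f" "\<not> f \<subseteq> D"
            using IH[OF Dmax' C''(1) C''(3)[symmetric] psubset.prems(6) C''(2,4)] by blast
          have fY: "f \<subseteq> ?Y'" using exposed_sub[OF f(1)] .
          have "\<not> f \<subseteq> C"
          proof
            assume "f \<subseteq> C"
            then have fC0: "f \<subseteq> C - {s}" using fY by auto
            obtain C' where C': "maximal_clique ?Y' E C'" "C - {s} \<subseteq> C'"
              using max_ext[OF Y'fin C0cl] by blast
            have "spans A C'" using crosses_spans[OF f(2)] fC0 C'(2) by blast
            then have "C' = D" using noi C' by blast
            then show False using f(3) fC0 C'(2) by auto
          qed
          then show ?thesis using liftC f by blast
        next
          case noii: False
          have big: "\<forall>M. maximal_clique ?Y' E M \<and> spans A M \<and> 3 \<le> card M \<longrightarrow> M = D"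
            using noii by blast
          have "\<not> D \<subseteq> C"
          proof
            assume "D \<subseteq> C"
            then have "C = D" using mc_max[OF psubset.prems(3) mc_clique[OF psubset.prems(2)]] by simp
            then show False using psubset.prems(4) by simp
          qed
          then obtain w where w: "w \<in> D" "w \<notin> C" by blast
          obtain q where q: "q \<in> D" "w \<in> A \<longleftrightarrow> q \<notin> A" using spans_opp[OF psubset.prems(6)] by blast
          have ex: "exposed_edge ?Y' E {w,q}"
            using only_big'[OF Y'fin Dmax' psubset.prems(7) big w(1) q] .
          have "\<not> {w,q} \<subseteq> C" using w by auto
          then show ?thesis using liftC[OF ex] crosses_I[OF q(2)] by blast
        qed
      qed
    next
      case sC: False
      have "C \<subseteq> ?Y'" using CY sC by auto
      then have Cmax': "maximal_clique ?Y' E C" using max_restr[OF psubset.prems(2)] by blast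
      obtain f where f: "exposed_edge ?Y' E f" "crosses A f" "\<not> f \<subseteq> C"
        using IH[OF Cmax' Dmax' psubset.prems(4-7)] by blast
      show ?thesis
      proof (cases "f \<subseteq> nbr E Y s")
        case False
        then show ?thesis using lift[OF psubset.hyps(1) f(1)] f by blast
      next
        case True
        obtain u v where uv: "f = {u,v}" "u \<in> A" "v \<notin> A" using f(2) unfolding crosses_def by blast
        have fY: "f \<subseteq> ?Y'" using exposed_sub[OF f(1)] .
        obtain w where w: "w \<in> f" "s \<in> A \<longleftrightarrow> w \<notin> A" using uv by (cases "s \<in> A") auto
        have sw: "s \<noteq> w" using w(2) by auto
        have gE: "{s,w} \<in> E" using True w(1) unfolding nbr_def by auto
        have uN: "u \<in> N" "v \<in> N" using True uv unfolding N_def by auto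
        have "s \<noteq> u" "s \<noteq> v" "u \<noteq> v" using fY uv by auto
        then have "N \<noteq> {s,w}" using uN w(1) uv(1) by auto
        moreover have "{s,w} \<subseteq> N" using w(1) True unfolding N_def by auto
        ultimately have "exposed_edge Y E {s,w}" using exN[OF gE] by auto
        then show ?thesis using crosses_I[OF w(2)] sC by auto
      qed
    qed
  qed
qed



lemma C1:
  assumes "finite X" "P1 E X" "exposed_edge X E e" "crosses A e"
  shows "\<exists>f. f \<noteq> e \<and> exposed_edge X E f \<and> crosses A f"
proof -
  obtain C where C: "maximal_clique X E C" "e \<subseteq> C" "C \<noteq> e"
    using exposed_elim[OF assms(1,3)] by blast
  obtain x y where xy: "e = {x,y}" "x \<in> A" "y \<notin> A" using assms(4) unfolding crosses_def by blast
  have xny: "x \<noteq> y" using xy by auto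
  have CX: "C \<subseteq> X" using clique_sub_Y[OF mc_clique[OF C(1)]] .
  have finC: "finite C" using finite_subset[OF CX assms(1)] .
  have "{x,y} \<subset> C" using C(2,3) xy(1) by auto
  then have "card {x,y} < card C" using psubset_card_mono[OF finC] by blast
  then have c3: "3 \<le> card C" using card2[OF xny] by auto
  have spC: "spans A C" using C(2) xy unfolding spans_def by auto
  show ?thesis
  proof (cases "\<exists>D. maximal_clique X E D \<and> spans A D \<and> D \<noteq> C \<and> 3 \<le> card D")
    case True
    then obtain D where D: "maximal_clique X E D" "spans A D" "D \<noteq> C" "3 \<le> card D" by blast
    obtain f where f: "exposed_edge X E f" "crosses A f" "\<not> f \<subseteq> C"
      using S_lemma[OF assms(1,2) C(1) D(1) D(3)[symmetric] spC D(2,4)] by blast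
    have "f \<noteq> e" using f(3) C(2) by auto
    then show ?thesis using f by blast
  next
    case False
    have big: "\<forall>M. maximal_clique X E M \<and> spans A M \<and> 3 \<le> card M \<longrightarrow> M = C"
    proof (intro allI impI)
      fix M assume H: "maximal_clique X E M \<and> spans A M \<and> 3 \<le> card M"
      show "M = C"
      proof (rule ccontr)
        assume "M \<noteq> C"
        then have "\<exists>D. maximal_clique X E D \<and> spans A D \<and> D \<noteq> C \<and> 3 \<le> card D" using H by blast
        then show False using False by simp
      qed
    qed
    have "C - {x,y} \<noteq> {}" using \<open>{x,y} \<subset> C\<close> by auto
    then obtain z where "z \<in> C - {x,y}" by blast
    then have z: "z \<in> C" "z \<noteq> x" "z \<noteq> y" by auto
    have xC: "x \<in> C" and yC: "y \<in> C" using C(2) xy(1) by auto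
    show ?thesis
    proof (cases "z \<in> A")
      case True
      have opp: "z \<in> A \<longleftrightarrow> y \<notin> A" using True xy(3) by simp
      have "exposed_edge X E {z,y}" using only_big'[OF assms(1) C(1) c3 big z(1) yC opp] .
      moreover have "{z,y} \<noteq> e"
      proof
        assume "{z,y} = e"
        then have "z \<in> {x,y}" using xy(1) by blast
        then show False using z(2,3) by blast
      qed
      moreover have "crosses A {z,y}" using crosses_I[OF opp] .
      ultimately show ?thesis by (intro exI[where x="{z,y}"] conjI)
    next
      case False
      have opp: "x \<in> A \<longleftrightarrow> z \<notin> A" using False xy(2) by simp
      have "exposed_edge X E {x,z}" using only_big'[OF assms(1) C(1) c3 big xC z(1) opp] .
      moreover have "{x,z} \<noteq> e"
      proof
        assume "{x,z} = e"
        then have "z \<in> {x,y}" using xy(1) by blast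
        then show False using z(2,3) by blast
      qed
      moreover have "crosses A {x,z}" using crosses_I[OF opp] .
      ultimately show ?thesis by (intro exI[where x="{x,z}"] conjI)
    qed
  qed
qed

lemma dbl_mem: "{a,b} = {x,y} \<Longrightarrow> x \<in> {a,b} \<and> y \<in> {a,b} \<and> a \<in> {x,y} \<and> b \<in> {x,y}"
  by (metis insertI1 insert_commute)

lemma clique3: "a \<in> X \<Longrightarrow> b \<in> X \<Longrightarrow> c \<in> X \<Longrightarrow> {a,b} \<in> E \<Longrightarrow> {a,c} \<in> E \<Longrightarrow> {b,c} \<in> E \<Longrightarrow> clique X E {a,b,c}"
  unfolding clique_def by (auto simp: insert_commute)

lemma simpD: "simplicial E Y s \<Longrightarrow> a \<in> Y \<Longrightarrow> b \<in> Y \<Longrightarrow> {s,a} \<in> E \<Longrightarrow> {s,b} \<in> E \<Longrightarrow> a \<noteq> b \<Longrightarrow> {a,b} \<in> E"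
  unfolding simplicial_def by blast

lemma P1_complete: "P1 (complete_graph X) X"
  unfolding P1_def simplicial_def complete_graph_def by blast

lemma P1_pres:
  assumes "finite X" "P1 E X" "exposed_edge X E e" "E \<subseteq> complete_graph X"
  shows "P1 (E - {e}) X"
proof -
  let ?H = "E - {e}"
  have eE: "e \<in> E" using exposed_E[OF assms(3)] .
  then obtain x y where xy: "e = {x,y}" "x \<noteq> y" "x \<in> X" "y \<in> X"
    using assms(4) unfolding complete_graph_def by blast
  obtain C where C: "maximal_clique X E C" "e \<subseteq> C"
    "\<forall>K. clique X E K \<and> e \<subseteq> K \<longrightarrow> K \<subseteq> C"
    using exposed_elim[OF assms(1,3)] by blast
  have Ccl: "clique X E C" using mc_clique[OF C(1)] .
  have top: "K \<subseteq> C" if "clique X E K" "x \<in> K" "y \<in> K" for K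
  proof -
    have "e \<subseteq> K" using that(2,3) xy(1) by simp
    then show ?thesis using C(3) that(1) by blast
  qed
  have wf: "a \<noteq> b" if "{a,b} \<in> E" for a b
  proof -
    from that assms(4) obtain u v where uv: "{a,b} = {u,v}" "u \<noteq> v" unfolding complete_graph_def by blast
    have uv2: "u \<in> {a,b}" "v \<in> {a,b}" using uv(1) by auto
    show ?thesis
    proof
      assume "a = b"
      then have "u = a" "v = a" using uv2 by auto
      then show False using uv(2) by simp
    qed
  qed
  have xyC: "x \<in> C" "y \<in> C" using C(2) xy(1) by auto
  have inner: "finite Z \<Longrightarrow> Z \<subseteq> X \<Longrightarrow> x \<in> Z \<Longrightarrow> y \<in> Z \<Longrightarrow>
      (\<exists>t. simplicial ?H Z t \<and> (t = x \<or> t = y \<longrightarrow> nbr ?H Z t \<subseteq> C))" for Z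
  proof (induction Z rule: finite_psubset_induct)
    case (psubset Z)
    have "Z \<noteq> {}" using psubset.prems(2) by auto
    then obtain s where s: "simplicial E Z s" using assms(2) psubset.prems(1) unfolding P1_def by blast
    have sZ: "s \<in> Z" using s unfolding simplicial_def by auto
    show ?case
    proof (cases "s \<in> C")
      case False
      have sxy: "s \<noteq> x" "s \<noteq> y" using False xyC by auto
      have "simplicial ?H Z s"
        unfolding simplicial_def
      proof (intro conjI ballI impI)
        show "s \<in> Z" by fact
        fix a b assume ab: "a \<in> Z" "b \<in> Z" "{s,a} \<in> ?H" "{s,b} \<in> ?H" "a \<noteq> b"
        have abE: "{a,b} \<in> E" using s ab unfolding simplicial_def by auto
        have "{a,b} \<noteq> e"
        proof
          assume "{a,b} = e"
          then have "x \<in> {a,b}" "y \<in> {a,b}" using dbl_mem xy(1) by blast+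
          then have "{s,x} \<in> E" "{s,y} \<in> E" using ab(3,4) by blast+
          moreover have "s \<in> X" using sZ psubset.prems(1) by blast
          moreover have exy: "{x,y} \<in> E" using eE xy(1) by simp
          ultimately have "clique X E {s,x,y}" using clique3[of s X x y E] xy(3,4) by blast
          then have "{s,x,y} \<subseteq> C" using top[of "{s,x,y}"] by simp
          then have "s \<in> C" by simp
          then show False using False by simp
        qed
        then show "{a,b} \<in> ?H" using abE by auto
      qed
      then show ?thesis using sxy by blast
    next
      case sC: True
      show ?thesis
      proof (cases "s = x \<or> s = y")
        case True
        have Ncl: "clique X E (insert s (nbr E Z s))"
          using simp_clique[OF s] psubset.prems(1) clique_mono_Y by blast
        have eyx: "{y,x} \<in> E" using eE xy(1) by (simp add: insert_commute)
        have "x \<in> insert s (nbr E Z s)" "y \<in> insert s (nbr E Z s)"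
          using True psubset.prems(2,3) xy(1) eE eyx unfolding nbr_def by auto
        then have NC: "insert s (nbr E Z s) \<subseteq> C" using top Ncl by blast
        have "nbr ?H Z s \<subseteq> C" using NC unfolding nbr_def by auto
        moreover have "simplicial ?H Z s"
          unfolding simplicial_def
        proof (intro conjI ballI impI)
          show "s \<in> Z" by fact
          fix a b assume ab: "a \<in> Z" "b \<in> Z" "{s,a} \<in> ?H" "{s,b} \<in> ?H" "a \<noteq> b"
          have abE: "{a,b} \<in> E" using s ab unfolding simplicial_def by auto
          have "a \<noteq> s" "b \<noteq> s" using wf ab by auto
          have "{a,b} \<noteq> e"
          proof
            assume "{a,b} = e"
            then have "s \<in> {a,b}" using True xy(1) dbl_mem by blast
            then show False using \<open>a \<noteq> s\<close> \<open>b \<noteq> s\<close> by blast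
          qed
          then show "{a,b} \<in> ?H" using abE by auto
        qed
        ultimately show ?thesis by blast
      next
        case False
        let ?Z' = "Z - {s}"
        have Zs: "?Z' \<subset> Z" using sZ by auto
        have ZX: "?Z' \<subseteq> X" using psubset.prems(1) by auto
        have xZ: "x \<in> ?Z'" using psubset.prems(2) False by auto
        have yZ: "y \<in> ?Z'" using psubset.prems(3) False by auto
        obtain t where t: "simplicial ?H ?Z' t" "t = x \<or> t = y \<longrightarrow> nbr ?H ?Z' t \<subseteq> C"
          using psubset.IH[OF Zs ZX xZ yZ] by blast
        have tZ: "t \<in> Z" "t \<noteq> s" using t(1) unfolding simplicial_def by auto
        show ?thesis
        proof (cases "{t,s} \<in> ?H")
          case False
          have nb: "nbr ?H Z t = nbr ?H ?Z' t" using False unfolding nbr_def by auto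
          have "simplicial ?H Z t"
            unfolding simplicial_def
          proof (intro conjI ballI impI)
            show "t \<in> Z" by fact
            fix a b assume ab: "a \<in> Z" "b \<in> Z" "{t,a} \<in> ?H" "{t,b} \<in> ?H" "a \<noteq> b"
            have "a \<noteq> s" "b \<noteq> s" using ab(3,4) False by auto
            then have "a \<in> ?Z'" "b \<in> ?Z'" using ab(1,2) by auto
            then show "{a,b} \<in> ?H" using simpD[OF t(1)] ab(3-5) by blast
          qed
          then show ?thesis using t(2) nb by auto
        next
          case True
          have "s \<noteq> x" "s \<noteq> y" using False by auto
          then have sx: "{s,x} \<in> E" "{s,y} \<in> E" using clique_edge[OF Ccl sC] xyC by auto
          have Ncl: "clique X E (insert s (nbr E Z s))"
            using simp_clique[OF s] psubset.prems(1) clique_mono_Y by blast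
          have "x \<in> insert s (nbr E Z s)" "y \<in> insert s (nbr E Z s)"
            using sx psubset.prems unfolding nbr_def by auto
          then have NC: "insert s (nbr E Z s) \<subseteq> C" using top Ncl by blast
          have "{s,t} \<in> E" using True by (simp add: insert_commute)
          then have "t \<in> nbr E Z s" using tZ unfolding nbr_def by simp
          then have tC: "t \<in> C" using NC by blast
          have txy: "t = x \<or> t = y"
          proof (rule ccontr)
            assume n: "\<not> (t = x \<or> t = y)"
            have "t \<noteq> x" "t \<noteq> y" using n by auto
            then have "{t,x} \<in> E" "{t,y} \<in> E" using clique_edge[OF Ccl tC] xyC by auto
            moreover have "{t,x} \<noteq> e"
            proof
              assume "{t,x} = e" then have "t \<in> {x,y}" using xy(1) dbl_mem by blast
              then show False using n by blast
            qed
            moreover have "{t,y} \<noteq> e"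
            proof
              assume "{t,y} = e" then have "t \<in> {x,y}" using xy(1) dbl_mem by blast
              then show False using n by blast
            qed
            ultimately have "{t,x} \<in> ?H" "{t,y} \<in> ?H" by auto
            then have "{x,y} \<in> ?H" using simpD[OF t(1) xZ yZ] xy(2) by blast
            then show False using xy(1) by auto
          qed
          have nbC: "nbr ?H Z t \<subseteq> C"
            using t(2) txy sC unfolding nbr_def by auto
          have "simplicial ?H Z t"
            unfolding simplicial_def
          proof (intro conjI ballI impI)
            show "t \<in> Z" by fact
            fix a b assume ab: "a \<in> Z" "b \<in> Z" "{t,a} \<in> ?H" "{t,b} \<in> ?H" "a \<noteq> b"
            have "a \<in> C" "b \<in> C" using nbC ab unfolding nbr_def by auto
            then have abE: "{a,b} \<in> E" using clique_edge[OF Ccl] ab(5) by blast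
            have "a \<noteq> t" "b \<noteq> t" using wf ab by auto
            have "{a,b} \<noteq> e"
            proof
              assume "{a,b} = e"
              then have "t \<in> {a,b}" using txy xy(1) dbl_mem by blast
              then show False using \<open>a \<noteq> t\<close> \<open>b \<noteq> t\<close> by blast
            qed
            then show "{a,b} \<in> ?H" using abE by auto
          qed
          then show ?thesis using nbC by blast
        qed
      qed
    qed
  qed
  show ?thesis
    unfolding P1_def
  proof (intro allI impI)
    fix Z assume Z1: "Z \<subseteq> X" and Z2: "Z \<noteq> {}"
    note Z = Z1 Z2
    show "\<exists>s. simplicial ?H Z s"
    proof (cases "x \<in> Z \<and> y \<in> Z")
      case True
      have "finite Z" using Z assms(1) by (meson finite_subset)
      then show ?thesis using inner[of Z] Z True by blast
    next
      case False
      obtain s where s: "simplicial E Z s" using assms(2) Z unfolding P1_def by blast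
      have "simplicial ?H Z s"
        unfolding simplicial_def
      proof (intro conjI ballI impI)
        show "s \<in> Z" using s unfolding simplicial_def by auto
        fix a b assume ab: "a \<in> Z" "b \<in> Z" "{s,a} \<in> ?H" "{s,b} \<in> ?H" "a \<noteq> b"
        have abE: "{a,b} \<in> E" using s ab unfolding simplicial_def by auto
        have "{a,b} \<noteq> e"
        proof
          assume "{a,b} = e"
          then have "x \<in> {a,b}" "y \<in> {a,b}" using xy(1) dbl_mem by blast+
          then show False using False ab(1,2) by blast
        qed
        then show "{a,b} \<in> ?H" using abE by auto
      qed
      then show ?thesis by blast
    qed
  qed
qed



abbreviation reach :: "'a set set \<Rightarrow> 'a \<Rightarrow> 'a \<Rightarrow> bool" where
  "reach E \<equiv> (\<lambda>u v. {u,v} \<in> E)\<^sup>*\<^sup>*"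

lemma R_sym: "reach E a b \<Longrightarrow> reach E b a"
proof (induction rule: rtranclp_induct)
  case base then show ?case by simp
next
  case (step c d)
  have "{d,c} \<in> E" using step(2) by (simp add: insert_commute)
  then show ?case using step(3) by (rule converse_rtranclp_into_rtranclp)
qed

lemma R_mono': "reach E a b \<Longrightarrow> E \<subseteq> E' \<Longrightarrow> reach E' a b"
proof (induction rule: rtranclp_induct)
  case base then show ?case by simp
next
  case (step c d)
  then show ?case by (meson rtranclp.rtrancl_into_rtrancl subsetD)
qed

lemma R_edge: "{u,v} \<in> E \<Longrightarrow> reach E u v" by auto

lemma R_decomp:
  "reach E a b \<Longrightarrow> reach (E - {{x,y}}) a b \<or> (reach (E - {{x,y}}) a x \<and> reach (E - {{x,y}}) y b)
     \<or> (reach (E - {{x,y}}) a y \<and> reach (E - {{x,y}}) x b)"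
proof (induction rule: rtranclp_induct)
  case base then show ?case by simp
next
  case (step c d)
  let ?E = "E - {{x,y}}"
  show ?case
  proof (cases "{c,d} = {x,y}")
    case False
    then have cd: "{c,d} \<in> ?E" using step(2) by auto
    from step(3) show ?thesis
      using rtranclp.rtrancl_into_rtrancl[of "\<lambda>u v. {u,v} \<in> ?E", OF _ cd] by blast
  next
    case True
    have cxy: "c \<in> {x,y}" "d \<in> {x,y}" using dbl_mem[OF True] by blast+
    have refl: "reach ?E y y" "reach ?E x x" by simp_all
    from cxy(2) consider (dx) "d = x" | (dy) "d = y" by blast
    then show ?thesis
    proof cases
      case dx
      from step(3) cxy(1) dx refl show ?thesis by blast
    next
      case dy
      from step(3) cxy(1) dy refl show ?thesis by blast
    qed
  qed
qed

lemma R_remove: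
  assumes "reach (E - {{x,y}}) x y" "reach E a b"
  shows "reach (E - {{x,y}}) a b"
proof -
  have yx: "reach (E - {{x,y}}) y x" using R_sym[OF assms(1)] .
  from R_decomp[OF assms(2), of x y] consider (c1) "reach (E - {{x,y}}) a b"
    | (c2) "reach (E - {{x,y}}) a x" "reach (E - {{x,y}}) y b"
    | (c3) "reach (E - {{x,y}}) a y" "reach (E - {{x,y}}) x b" by blast
  then show ?thesis
  proof cases
    case c1 then show ?thesis .
  next
    case c2 then show ?thesis using rtranclp_trans[OF rtranclp_trans[OF c2(1) assms(1)] c2(2)] by simp
  next
    case c3 then show ?thesis using rtranclp_trans[OF rtranclp_trans[OF c3(1) yx] c3(2)] by simp
  qed
qed

lemma fms_finite: "finite_metric_space X d \<Longrightarrow> finite X"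
  unfolding finite_metric_space_def by simp

lemma fms_zero: "finite_metric_space X d \<Longrightarrow> a \<in> X \<Longrightarrow> b \<in> X \<Longrightarrow> d a b = 0 \<longleftrightarrow> a = b"
  unfolding finite_metric_space_def by simp

lemma fms_sym: "finite_metric_space X d \<Longrightarrow> a \<in> X \<Longrightarrow> b \<in> X \<Longrightarrow> d a b = d b a"
  unfolding finite_metric_space_def by simp

lemma fms_tri: "finite_metric_space X d \<Longrightarrow> a \<in> X \<Longrightarrow> b \<in> X \<Longrightarrow> c \<in> X \<Longrightarrow> d a c \<le> d a b + d b c"
  unfolding finite_metric_space_def by simp

lemma metric_pos:
  assumes "finite_metric_space X d" "a \<in> X" "b \<in> X" "a \<noteq> b"
  shows "d a b > 0"
proof -
  have "d a a \<le> d a b + d b a" using fms_tri[OF assms(1,2,3,2)] .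
  moreover have "d a a = 0" using fms_zero[OF assms(1,2,2)] by simp
  moreover have "d b a = d a b" using fms_sym[OF assms(1,3,2)] .
  moreover have "d a b \<noteq> 0" using fms_zero[OF assms(1,2,3)] assms(4) by simp
  ultimately show ?thesis by linarith
qed

lemma edge_weight_eq:
  assumes "finite_metric_space X d" "a \<in> X" "b \<in> X" "a \<noteq> b"
  shows "edge_weight d {a,b} = d a b"
proof -
  define p where "p = (SOME x. x \<in> {a,b})"
  have p: "p \<in> {a,b}" unfolding p_def by (rule someI[of _ a]) simp
  define q where "q = (SOME y. y \<in> {a,b} \<and> y \<noteq> p)"
  have "\<exists>y. y \<in> {a,b} \<and> y \<noteq> p" using p assms(4) by auto
  then have q: "q \<in> {a,b} \<and> q \<noteq> p" unfolding q_def by (rule someI_ex)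
  have "edge_weight d {a,b} = d p q" unfolding edge_weight_def p_def q_def by simp
  moreover have "d b a = d a b" using fms_sym[OF assms(1,3,2)] .
  ultimately show ?thesis using p q by auto
qed

lemma complete_edge: "f \<in> complete_graph X \<Longrightarrow> \<exists>a b. f = {a,b} \<and> a \<in> X \<and> b \<in> X \<and> a \<noteq> b"
  unfolding complete_graph_def by blast

lemma w_pos:
  assumes "finite_metric_space X d" "f \<in> complete_graph X"
  shows "edge_weight d f > 0"
proof -
  obtain a b where ab: "f = {a,b}" "a \<in> X" "b \<in> X" "a \<noteq> b" using complete_edge[OF assms(2)] by blast
  have "edge_weight d f = d a b" using edge_weight_eq[OF assms(1) ab(2-4)] ab(1) by simp
  then show ?thesis using metric_pos[OF assms(1) ab(2-4)] by simp
qed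

lemma finite_complete: "finite X \<Longrightarrow> finite (complete_graph X)"
proof -
  assume "finite X"
  moreover have "complete_graph X \<subseteq> Pow X" unfolding complete_graph_def by auto
  ultimately show ?thesis by (meson finite_Pow_iff finite_subset)
qed

definition CS :: "'a set \<Rightarrow> 'a set set set" where
  "CS X = {T. T \<subseteq> complete_graph X \<and> connected_on X T}"

lemma finite_CS: "finite X \<Longrightarrow> finite (CS X)"
proof -
  assume "finite X"
  then have "finite (Pow (complete_graph X))" using finite_complete by blast
  moreover have "CS X \<subseteq> Pow (complete_graph X)" unfolding CS_def by auto
  ultimately show ?thesis by (meson finite_subset)
qed

lemma complete_CS: "complete_graph X \<in> CS X"
  unfolding CS_def connected_on_def
proof (intro CollectI conjI ballI)
  fix a b assume ab: "a \<in> X" "b \<in> X"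
  show "reach (complete_graph X) a b"
  proof (cases "a = b")
    case True then show ?thesis by simp
  next
    case False
    then have "{a,b} \<in> complete_graph X" unfolding complete_graph_def using ab by blast
    then show ?thesis by (rule r_into_rtranclp)
  qed
qed simp

lemma tw_remove: "finite T \<Longrightarrow> e \<in> T \<Longrightarrow> tree_weight d T = edge_weight d e + tree_weight d (T - {e})"
  unfolding tree_weight_def by (simp add: sum.remove)

lemma tw_insert: "finite T \<Longrightarrow> f \<notin> T \<Longrightarrow> tree_weight d (insert f T) = edge_weight d f + tree_weight d T"
  unfolding tree_weight_def by simp

lemma min_is_tree:
  assumes fm: "finite_metric_space X d" and T: "T \<in> CS X"
    and le: "\<forall>T'\<in>CS X. tree_weight d T \<le> tree_weight d T'"
  shows "spanning_tree X T"
  unfolding spanning_tree_def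
proof (intro conjI allI impI)
  have finX: "finite X" using fms_finite[OF fm] .
  show "T \<subseteq> complete_graph X" "connected_on X T" using T unfolding CS_def by auto
  fix x y assume xy: "{x,y} \<in> T"
  show "\<not> reach (T - {{x,y}}) x y"
  proof
    assume r: "reach (T - {{x,y}}) x y"
    have "T - {{x,y}} \<in> CS X"
      using T R_remove[OF r] unfolding CS_def connected_on_def by auto
    then have "tree_weight d T \<le> tree_weight d (T - {{x,y}})" using le by auto
    moreover have "T \<subseteq> complete_graph X" using T unfolding CS_def by simp
    then have "finite T" using finite_subset[OF _ finite_complete[OF finX]] by blast
    moreover have "edge_weight d {x,y} > 0" using w_pos[OF fm] xy T unfolding CS_def by auto
    ultimately show False using tw_remove[of T "{x,y}" d] xy by auto
  qed
qed



lemma step_lemma: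
  assumes fm: "finite_metric_space X d" and GC: "G \<subseteq> complete_graph X" and P: "P1 G X"
    and er: "d_erasure X d G H" and T: "T \<in> CS X" "T \<subseteq> G"
    and le: "\<forall>T'\<in>CS X. tree_weight d T \<le> tree_weight d T'"
  shows "\<exists>T'. T' \<in> CS X \<and> T' \<subseteq> H \<and> (\<forall>T''\<in>CS X. tree_weight d T' \<le> tree_weight d T'')"
proof -
  have finX: "finite X" using fms_finite[OF fm] .
  obtain e where e: "exposed_edge X G e" "H = G - {e}"
    "\<forall>e'. exposed_edge X G e' \<longrightarrow> edge_weight d e' \<le> edge_weight d e"
    using er unfolding d_erasure_def by blast
  show ?thesis
  proof (cases "e \<in> T")
    case False
    then show ?thesis using T le e(2) by blast
  next
    case True
    have TC: "T \<subseteq> complete_graph X" and Tc: "connected_on X T" using T unfolding CS_def by auto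
    have finT: "finite T" using TC finite_complete[OF finX] by (meson finite_subset)
    obtain x y where xy: "e = {x,y}" "x \<in> X" "y \<in> X" "x \<noteq> y" using complete_edge TC True by blast
    let ?R = "T - {e}"
    define A where "A = {w. reach ?R x w}"
    have st: "spanning_tree X T" using min_is_tree[OF fm T(1) le] .
    have yA: "y \<notin> A" using st True xy unfolding spanning_tree_def A_def by auto
    have xA: "x \<in> A" unfolding A_def by simp
    have "crosses A e" using xA yA xy unfolding crosses_def by blast
    then obtain f where f: "f \<noteq> e" "exposed_edge X G f" "crosses A f"
      using C1[OF finX P e(1)] by blast
    obtain u v where uv: "f = {u,v}" "u \<in> A" "v \<notin> A" using f(3) unfolding crosses_def by blast
    have fG: "f \<in> G" using exposed_E[OF f(2)] .
    have fw: "edge_weight d f \<le> edge_weight d e" using e(3) f(2) by blast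
    obtain a b where ab: "f = {a,b}" "a \<in> X" "b \<in> X" using complete_edge GC fG by blast
    have "{u,v} = {a,b}" using ab(1) uv(1) by simp
    then have "u \<in> {a,b}" "v \<in> {a,b}" using dbl_mem by blast+
    then have uvX: "u \<in> X" "v \<in> X" using ab(2,3) by blast+
    have xu: "reach ?R x u" using uv(2) unfolding A_def by simp
    have fnot: "f \<notin> ?R"
    proof
      assume "f \<in> ?R"
      then have "reach ?R u v" using uv(1) by auto
      then have "reach ?R x v" using xu by (meson rtranclp_trans)
      then show False using uv(3) unfolding A_def by simp
    qed
    define T' where "T' = insert f ?R"
    have RT': "?R \<subseteq> T'" unfolding T'_def by auto
    have rdec: "reach ?R x w \<or> reach ?R y w" if "w \<in> X" for w
    proof -
      have "reach T x w" using Tc xy(2) that unfolding connected_on_def by auto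
      from R_decomp[OF this, of x y] xy(1) show ?thesis by auto
    qed
    have yv: "reach ?R y v" using rdec[OF uvX(2)] uv(3) unfolding A_def by auto
    have xy': "reach T' x y"
    proof -
      have "reach T' x u" using R_mono'[OF xu RT'] .
      moreover have "reach T' u v" using uv(1) unfolding T'_def by auto
      moreover have "reach T' v y" using R_mono'[OF R_sym[OF yv] RT'] .
      ultimately show ?thesis by (meson rtranclp_trans)
    qed
    have xw: "reach T' x w" if "w \<in> X" for w
      using rdec[OF that] R_mono'[OF _ RT'] xy' by (meson rtranclp_trans)
    have conn: "connected_on X T'"
      unfolding connected_on_def
    proof (intro ballI)
      fix a b assume "a \<in> X" "b \<in> X"
      then have "reach T' x a" "reach T' x b" using xw by blast+
      then show "reach T' a b" using rtranclp_trans[OF R_sym[of T' x a]] by blast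
    qed
    have T'C: "T' \<subseteq> complete_graph X" using TC fG GC unfolding T'_def by auto
    have T'CS: "T' \<in> CS X" using conn T'C unfolding CS_def by auto
    have T'H: "T' \<subseteq> H" using T(2) fG f(1) e(2) unfolding T'_def by auto
    have "tree_weight d T' = edge_weight d f + tree_weight d ?R"
      unfolding T'_def using tw_insert[OF _ fnot] finT by auto
    moreover have "tree_weight d T = edge_weight d e + tree_weight d ?R"
      using tw_remove[OF finT True] .
    ultimately have "tree_weight d T' \<le> tree_weight d T" using fw by auto
    then show ?thesis using T'CS T'H le by force
  qed
qed

theorem theorem3p2:
  fixes X :: "'a set" and d :: "'a \<Rightarrow> 'a \<Rightarrow> real" and m :: nat and G :: "nat \<Rightarrow> 'a set set"
  assumes "finite_metric_space X d"
    and "G 0 = complete_graph X"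
    and "\<forall>i<m. d_erasure X d (G i) (G (Suc i))"
  shows "\<exists>T. minimum_spanning_tree X d T \<and> T \<subseteq> G m"
proof -
  have finX: "finite X" using fms_finite[OF assms(1)] .
  let ?Inv = "\<lambda>i. G i \<subseteq> complete_graph X \<and> P1 (G i) X \<and>
     (\<exists>T. T \<in> CS X \<and> T \<subseteq> G i \<and> (\<forall>T''\<in>CS X. tree_weight d T \<le> tree_weight d T''))"
  have inv: "i \<le> m \<Longrightarrow> ?Inv i" for i
  proof (induction i)
    case 0
    have "finite (tree_weight d ` CS X)" using finite_CS[OF finX] by simp
    moreover have "tree_weight d ` CS X \<noteq> {}" using complete_CS by blast
    ultimately have "Min (tree_weight d ` CS X) \<in> tree_weight d ` CS X" by (rule Min_in)
    then obtain T where T: "T \<in> CS X" "tree_weight d T = Min (tree_weight d ` CS X)" by auto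
    have "\<forall>T''\<in>CS X. tree_weight d T \<le> tree_weight d T''"
      using T(2) finite_CS[OF finX] by auto
    moreover have "T \<subseteq> G 0" using T(1) assms(2) unfolding CS_def by auto
    ultimately show ?case using assms(2) P1_complete T(1) by auto
  next
    case (Suc i)
    then have I: "?Inv i" by auto
    have er: "d_erasure X d (G i) (G (Suc i))" using assms(3) Suc.prems by auto
    then obtain e where e: "exposed_edge X (G i) e" "G (Suc i) = G i - {e}"
      unfolding d_erasure_def by blast
    have "G (Suc i) \<subseteq> complete_graph X" using I e(2) by auto
    moreover have "P1 (G (Suc i)) X" using P1_pres[OF finX _ e(1)] I e(2) by auto
    moreover obtain T where "T \<in> CS X" "T \<subseteq> G i" "\<forall>T''\<in>CS X. tree_weight d T \<le> tree_weight d T''"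
      using I by blast
    then have "\<exists>T'. T' \<in> CS X \<and> T' \<subseteq> G (Suc i) \<and> (\<forall>T''\<in>CS X. tree_weight d T' \<le> tree_weight d T'')"
      using step_lemma[OF assms(1) _ _ er] I by blast
    ultimately show ?case by blast
  qed
  then obtain T where T: "T \<in> CS X" "T \<subseteq> G m" "\<forall>T''\<in>CS X. tree_weight d T \<le> tree_weight d T''"
    by blast
  have "spanning_tree X T" using min_is_tree[OF assms(1) T(1,3)] .
  moreover have "\<forall>T'. spanning_tree X T' \<longrightarrow> tree_weight d T \<le> tree_weight d T'"
    using T(3) unfolding spanning_tree_def CS_def by blast
  ultimately show ?thesis using T(2) unfolding minimum_spanning_tree_def by blast
qed


end
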